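(* For all $n\in\mathbf N$ and integers $m$ with $0\le m\le n-1$, $$\left\langle{n\atop m}\right\rangle=\left\langle{n-1\atop m}\right\rangle^{(1,0)} .$$
   Context: Euler numbers: $\left\langle{0\atop 0}\right\rangle=1$, $\left\langle{n\atop k}\right\rangle=0$ for $k<0$ or $k>n$, $\left\langle{n\atop k}\right\rangle=(n-k)\left\langle{n-1\atop k-1}\right\rangle+(k+1)\left\langle{n-1\atop k}\right\rangle$. For sequences $a=(a_j)_{j\ge1}$, $b=(b_j)_{j\ge0}$ and $\omega=(\varepsilon_1,\dots,\varepsilon_N)\in\{0,1\}^N$ let $w^{a,b}_N(\omega)=\prod_{t=1}^N g_t$ where, with $j=\#\{l<t:\varepsilon_l=0\}$, $g_t=a_{t-j}$ if $\varepsilon_t=0$ and $g_t=b_j$ if $\varepsilon_t=1$; let $\zeta_{Nk}(a,b)=\sum w^{a,b}_N(\omega)$ over $\omega$ with exactly $k$ zeros ($N\ge1$, $0\le k\le N$), $\zeta_{00}=1$, $\zeta_{Nk}=0$ if $k<0$ or $k>N$. For integers $0\le\mu\le\nu$, the associated Euler numbers of rank $(\nu,\mu)$ are $\left\langle{N\atop k}\right\rangle^{(\nu,\mu)}=\zeta_{Nk}(a,b)$ with $a_j=\nu-\mu+j-1$ $(j\ge1)$ and $b_j=\mu+j+1$ $(j\ge0)$ (i.e. the sequences $\alpha_l=l-1$, $\beta_j=j+1$ shifted by $\nu-\mu$ and $\mu$ respectively). *)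

theory Defs
  imports Main
begin

fun eulerian :: "nat \<Rightarrow> int \<Rightarrow> int" where
  "eulerian 0 k = (if k = 0 then 1 else 0)"
| "eulerian (Suc n) k =
     (if k < 0 \<or> k > int (Suc n) then 0
      else (int (Suc n) - k) * eulerian n (k - 1) + (k + 1) * eulerian n k)"

text \<open>Words omega in {0,1}^N are lists of naturals with entries in {0,1}; list position t
  (0-based) corresponds to index t+1 in the paper.  j = number of zeros strictly before.\<close>
definition zeros_before :: "nat list \<Rightarrow> nat \<Rightarrow> nat" where
  "zeros_before \<omega> t = card {l. l < t \<and> \<omega> ! l = 0}"

definition weight :: "(nat \<Rightarrow> int) \<Rightarrow> (nat \<Rightarrow> int) \<Rightarrow> nat list \<Rightarrow> int" where
  "weight a b \<omega> = (\<Prod>t < length \<omega>.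
      if \<omega> ! t = 0 then a (t + 1 - zeros_before \<omega> t) else b (zeros_before \<omega> t))"

definition zeta :: "(nat \<Rightarrow> int) \<Rightarrow> (nat \<Rightarrow> int) \<Rightarrow> nat \<Rightarrow> int \<Rightarrow> int" where
  "zeta a b N k =
     (if N = 0 then (if k = 0 then 1 else 0)
      else if k < 0 \<or> k > int N then 0
      else \<Sum>\<omega> \<in> {\<omega>. length \<omega> = N \<and> set \<omega> \<subseteq> {0, 1}
                     \<and> int (length (filter (\<lambda>e. e = 0) \<omega>)) = k}. weight a b \<omega>)"

definition assoc_eulerian :: "nat \<Rightarrow> nat \<Rightarrow> nat \<Rightarrow> int \<Rightarrow> int" where
  "assoc_eulerian \<nu> \<mu> N k =
     zeta (\<lambda>j. int \<nu> - int \<mu> + int j - 1) (\<lambda>j. int \<mu> + int j + 1) N k"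

end

theory Submission
  imports Defs
begin

definition SS :: "nat \<Rightarrow> int \<Rightarrow> nat list set" where
  "SS N k = {\<omega>. length \<omega> = N \<and> set \<omega> \<subseteq> {0, 1}
                     \<and> int (length (filter (\<lambda>e. e = 0) \<omega>)) = k}"

definition ZZ :: "(nat \<Rightarrow> int) \<Rightarrow> (nat \<Rightarrow> int) \<Rightarrow> nat \<Rightarrow> int \<Rightarrow> int" where
  "ZZ a b N k = (\<Sum>\<omega> \<in> SS N k. weight a b \<omega>)"

lemma SS_finite: "finite (SS N k)"
proof -
  have "SS N k \<subseteq> {\<omega>. set \<omega> \<subseteq> {0,1} \<and> length \<omega> = N}" by (auto simp: SS_def)
  moreover have "finite {\<omega>. set \<omega> \<subseteq> {0::nat,1} \<and> length \<omega> = N}"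
    by (rule finite_lists_length_eq) simp
  ultimately show ?thesis by (rule finite_subset)
qed

lemma zb_append: "t \<le> length w \<Longrightarrow> zeros_before (w @ v) t = zeros_before w t"
  unfolding zeros_before_def
  by (rule arg_cong[where f=card]) (auto simp: nth_append)

lemma zb_len: "zeros_before w (length w) = length (filter (\<lambda>e. e = 0) w)"
  unfolding zeros_before_def by (simp add: length_filter_conv_card)

lemma weight_snoc:
  "weight a b (w @ [x]) = weight a b w *
     (if x = 0 then a (length w + 1 - length (filter (\<lambda>e. e = 0) w))
      else b (length (filter (\<lambda>e. e = 0) w)))"
proof -
  have "weight a b (w @ [x]) = (\<Prod>t < length w.
      if (w@[x]) ! t = 0 then a (t + 1 - zeros_before (w@[x]) t) else b (zeros_before (w@[x]) t))
      * (if x = 0 then a (length w + 1 - zeros_before (w@[x]) (length w))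
         else b (zeros_before (w@[x]) (length w)))"
    unfolding weight_def by (simp add: lessThan_Suc)
  also have "(\<Prod>t < length w.
      if (w@[x]) ! t = 0 then a (t + 1 - zeros_before (w@[x]) t) else b (zeros_before (w@[x]) t))
      = weight a b w"
    unfolding weight_def
    by (rule prod.cong) (auto simp: nth_append zb_append)
  finally show ?thesis by (simp add: zb_append zb_len)
qed

lemma SS_Suc: "SS (Suc N) k = (\<lambda>w. w @ [0]) ` SS N (k - 1) \<union> (\<lambda>w. w @ [1]) ` SS N k"
proof (rule set_eqI, rule iffI)
  fix w assume w: "w \<in> SS (Suc N) k"
  then have "length w = Suc N" by (simp add: SS_def)
  then obtain v x where wv: "w = v @ [x]"
    by (metis length_Suc_conv_rev)
  have x: "x = 0 \<or> x = 1" using w wv by (simp add: SS_def)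
  show "w \<in> (\<lambda>w. w @ [0]) ` SS N (k - 1) \<union> (\<lambda>w. w @ [1]) ` SS N k"
  proof (cases "x = 0")
    case True
    then have "v \<in> SS N (k - 1)" using w wv by (simp add: SS_def)
    then show ?thesis using wv True by blast
  next
    case False
    then have "v \<in> SS N k" using w wv x by (simp add: SS_def)
    then show ?thesis using wv False x by blast
  qed
next
  fix w assume "w \<in> (\<lambda>w. w @ [0]) ` SS N (k - 1) \<union> (\<lambda>w. w @ [1]) ` SS N k"
  then show "w \<in> SS (Suc N) k" by (auto simp: SS_def)
qed
lemma ZZ_Suc:
  "ZZ (\<lambda>j. int j) (\<lambda>j. int j + 1) (Suc N) k =
     (int N + 2 - k) * ZZ (\<lambda>j. int j) (\<lambda>j. int j + 1) N (k - 1)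
     + (k + 1) * ZZ (\<lambda>j. int j) (\<lambda>j. int j + 1) N k"
proof -
  let ?a = "\<lambda>j. int j" and ?b = "\<lambda>j. int j + 1"
  have disj: "(\<lambda>w. w @ [0::nat]) ` SS N (k - 1) \<inter> (\<lambda>w. w @ [1]) ` SS N k = {}" by auto
  have inj0: "inj_on (\<lambda>w. w @ [0::nat]) A" for A by (rule inj_onI) simp
  have inj1: "inj_on (\<lambda>w. w @ [Suc 0]) A" for A by (rule inj_onI) simp
  have "ZZ ?a ?b (Suc N) k = (\<Sum>w \<in> SS N (k - 1). weight ?a ?b (w @ [0]))
        + (\<Sum>w \<in> SS N k. weight ?a ?b (w @ [1]))"
    unfolding ZZ_def SS_Suc
    apply (subst sum.union_disjoint[OF _ _ disj])
      apply (simp_all add: SS_finite)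
    apply (subst sum.reindex[OF inj0])
    apply (subst sum.reindex[OF inj1])
    apply (simp add: comp_def)
    done
  also have "(\<Sum>w \<in> SS N (k - 1). weight ?a ?b (w @ [0]))
       = (\<Sum>w \<in> SS N (k - 1). (int N + 2 - k) * weight ?a ?b w)"
  proof (rule sum.cong)
    fix w assume "w \<in> SS N (k - 1)"
    then have "length w = N" "int (length (filter (\<lambda>e. e = 0) w)) = k - 1"
      by (auto simp: SS_def)
    moreover have "length (filter (\<lambda>e. e = 0) w) \<le> length w" by (rule length_filter_le)
    ultimately show "weight ?a ?b (w @ [0]) = (int N + 2 - k) * weight ?a ?b w"
      by (simp add: weight_snoc of_nat_diff)
  qed simp
  also have "(\<Sum>w \<in> SS N k. weight ?a ?b (w @ [1]))
       = (\<Sum>w \<in> SS N k. (k + 1) * weight ?a ?b w)"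
  proof (rule sum.cong)
    fix w assume "w \<in> SS N k"
    then have "int (length (filter (\<lambda>e. e = 0) w)) = k"
      by (auto simp: SS_def)
    then show "weight ?a ?b (w @ [1]) = (k + 1) * weight ?a ?b w"
      by (simp add: weight_snoc)
  qed simp
  finally show ?thesis by (simp add: ZZ_def sum_distrib_left)
qed

lemma SS_0: "SS 0 k = (if k = 0 then {[]} else {})"
  by (auto simp: SS_def)

lemma ZZ_0: "ZZ a b 0 k = (if k = 0 then 1 else 0)"
  by (simp add: ZZ_def SS_0 weight_def)

lemma zeta_ZZ: "zeta a b N k = ZZ a b N k"
proof -
  have e: "SS N k = {}" if "k < 0 \<or> k > int N"
  proof -
    have "int (length (filter (\<lambda>e. e = 0) w)) \<le> int N" if "length w = N" for w :: "nat list"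
      using that length_filter_le[of "\<lambda>e. e = 0" w] by simp
    then show ?thesis using that unfolding SS_def by force
  qed
  show ?thesis
  proof (cases "N = 0")
    case True
    then show ?thesis by (simp add: zeta_def ZZ_0)
  next
    case False
    then show ?thesis
      unfolding zeta_def ZZ_def[symmetric] SS_def[symmetric] using e by (simp add: ZZ_def)
  qed
qed

lemma main_ind: "eulerian (Suc N) k = ZZ (\<lambda>j. int j) (\<lambda>j. int j + 1) N k"
proof (induction N arbitrary: k)
  case 0
  show ?case by (simp add: ZZ_0)
next
  case (Suc N)
  have "eulerian (Suc (Suc N)) k =
     (int N + 2 - k) * eulerian (Suc N) (k - 1) + (k + 1) * eulerian (Suc N) k"
  proof (cases "k < 0 \<or> k > int N + 2")
    case True
    then show ?thesis by auto
  next
    case False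
    then show ?thesis by (simp only: eulerian.simps(2)[of "Suc N"]) (simp add: algebra_simps)
  qed
  then show ?case using Suc.IH[of k] Suc.IH[of "k - 1"] ZZ_Suc[of N k]
    by (simp only:)
qed

theorem mainTheorem14:
  fixes n :: nat and m :: int
  assumes "0 \<le> m" and "m \<le> int n - 1"
  shows "eulerian n m = assoc_eulerian 1 0 (n - 1) m"
proof -
  obtain N where n: "n = Suc N" using assms by (cases n) auto
  have "assoc_eulerian 1 0 (n - 1) m = ZZ (\<lambda>j. int j) (\<lambda>j. int j + 1) N m"
    unfolding assoc_eulerian_def zeta_ZZ n by simp
  then show ?thesis using main_ind[of N m] n by simp
qed

end
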